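(* Let $A\in\mathbb{R}^{m\times n}$, let $k\geq1$, $\alpha>0$, $\Delta\geq 0$, and $0<L\leq U$ be such that \[ L\|v\|_2\leq\|Av\|_1\leq U\|v\|_2 \] for all $(1+\alpha^2)k$-sparse vectors $v\in\mathbb{R}^n$. Let $S\subset[n]$ be fixed with $|S|=k$. Then for all \[ v\in V_S=\{v\in\mathbb{R}^n : \Delta+\|v_S\|_1\geq\|v_{\overline{S}}\|_1\} \] we have \[ \frac{L}{1+\alpha}\left(\alpha-\frac{U}{L}\right)\|v\|_2-\frac{2U\Delta}{\alpha\sqrt{k}} \leq \|Av\|_1 \leq U\left(1+\frac{1}{\alpha}\right)\|v\|_2+\frac{U\Delta}{\alpha\sqrt{k}}. \]
   Context: For $v\in\mathbb{R}^n$ and $T\subset[n]$, $v_T$ denotes $v$ with all entries whose indices lie outside $T$ set to $0$, and $\overline{S}=[n]\setminus S$. A vector is $s$-sparse if it has at most $s$ nonzero entries. *)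

theory Defs
  imports "HOL-Analysis.Analysis"
begin

text \<open>Vectors in R^n are modelled as real^'n; the l2 norm is the library norm.\<close>

definition l1norm :: "real ^ 'n \<Rightarrow> real" where
  "l1norm v = (\<Sum>i\<in>UNIV. \<bar>v $ i\<bar>)"

definition restr :: "real ^ 'n \<Rightarrow> 'n set \<Rightarrow> real ^ 'n" where
  "restr v T = (\<chi> i. if i \<in> T then v $ i else 0)"

definition sparse :: "real \<Rightarrow> real ^ 'n \<Rightarrow> bool" where
  "sparse s v \<longleftrightarrow> real (card {i. v $ i \<noteq> 0}) \<le> s"

end

theory Submission
  imports Defs
begin

lemma norm_sq_sum: "(norm (v::real^'n))\<^sup>2 = (\<Sum>i\<in>UNIV. (v$i)\<^sup>2)"
  by (simp add: norm_vec_def L2_set_def sum_nonneg)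

lemma restr_nth: "restr v T $ i = (if i \<in> T then v $ i else 0)"
  by (simp add: restr_def)

lemma l1_restr: "l1norm (restr v T) = (\<Sum>i\<in>T. \<bar>v$i\<bar>)"
  unfolding l1norm_def restr_nth
  by (simp add: if_distrib sum.If_cases)

lemma norm_restr_sq: "(norm (restr v T))\<^sup>2 = (\<Sum>i\<in>T. (v$i)\<^sup>2)"
proof -
  have "(\<Sum>i\<in>UNIV. (restr v T $ i)\<^sup>2) = (\<Sum>i\<in>UNIV. if i \<in> T then (v$i)\<^sup>2 else 0)"
    by (rule sum.cong) (auto simp: restr_nth)
  then show ?thesis unfolding norm_sq_sum by (simp add: sum.If_cases)
qed

lemma norm_restr_le: "norm (restr v T) \<le> norm v"
proof -
  have "(\<Sum>i\<in>T. (v$i)\<^sup>2) \<le> (\<Sum>i\<in>UNIV. (v$i)\<^sup>2)"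
    by (rule sum_mono2) auto
  then have "(norm (restr v T))\<^sup>2 \<le> (norm v)\<^sup>2" unfolding norm_restr_sq by (simp only: norm_sq_sum)
  then show ?thesis by (simp add: power2_le_iff_abs_le)
qed

lemma restr_add: "T \<inter> T' = {} \<Longrightarrow> restr v (T \<union> T') = restr v T + restr v T'"
  by (auto simp: vec_eq_iff restr_nth)

lemma restr_compl: "restr v T + restr v (-T) = v"
  by (auto simp: vec_eq_iff restr_nth)

lemma l1_cs: "(\<Sum>i\<in>T. \<bar>v$i\<bar>) \<le> sqrt (real (card T)) * norm (restr v T)"
proof -
  have "(\<Sum>i\<in>T. \<bar>v$i\<bar> * \<bar>1\<bar>) \<le> L2_set (\<lambda>i. v$i) T * L2_set (\<lambda>i. 1::real) T"
    by (rule L2_set_mult_ineq)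
  moreover have "L2_set (\<lambda>i. v$i) T = norm (restr v T)"
    using norm_restr_sq[of v T] by (simp add: L2_set_def real_sqrt_unique sum_nonneg)
  moreover have "L2_set (\<lambda>i. 1::real) T = sqrt (real (card T))" by (simp add: L2_set_def)
  ultimately show ?thesis by (simp add: mult.commute)
qed

lemma l1_nonneg: "l1norm v \<ge> 0" by (simp add: l1norm_def sum_nonneg)

lemma l1_add: "l1norm (a + b) \<le> l1norm a + l1norm b"
  unfolding l1norm_def sum.distrib[symmetric] by (rule sum_mono) (simp add: abs_triangle_ineq)

lemma l1_diff: "l1norm (a - b) \<le> l1norm a + l1norm b"
  unfolding l1norm_def sum.distrib[symmetric] by (rule sum_mono) (simp add: abs_triangle_ineq4)

lemma supp_restr: "{i. restr v T $ i \<noteq> 0} \<subseteq> T"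
  by (auto simp: restr_nth split: if_splits)

lemma amgm: assumes "m \<ge> 0" "\<theta> \<ge> 0" "b > 0"
  shows "sqrt (m * \<theta>) \<le> m / (2 * sqrt b) + \<theta> * sqrt b / 2"
proof -
  have sb: "sqrt b > 0" using assms by simp
  have "0 \<le> (m / sqrt b - \<theta> * sqrt b)\<^sup>2" by simp
  hence "4 * (m * \<theta>) \<le> (m / sqrt b + \<theta> * sqrt b)\<^sup>2"
    using sb by (simp add: power2_eq_square field_simps)
  hence "sqrt (4 * (m * \<theta>)) \<le> m / sqrt b + \<theta> * sqrt b"
    using sb assms by (intro real_le_lsqrt) auto
  moreover have "sqrt (4 * (m * \<theta>)) = 2 * sqrt (m * \<theta>)" by (simp add: real_sqrt_mult)
  ultimately show ?thesis by (simp add: field_simps)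
qed

lemma top_block:
  fixes f :: "'a \<Rightarrow> real"
  assumes "finite I" "b \<le> card I"
  shows "\<exists>B\<subseteq>I. card B = b \<and> (\<forall>i\<in>B. \<forall>j\<in>I-B. \<bar>f j\<bar> \<le> \<bar>f i\<bar>)"
  using assms(2)
proof (induction b)
  case 0 then show ?case by auto
next
  case (Suc b)
  then obtain B where B: "B \<subseteq> I" "card B = b" "\<forall>i\<in>B. \<forall>j\<in>I-B. \<bar>f j\<bar> \<le> \<bar>f i\<bar>" by auto
  have fin: "finite (I - B)" using assms by auto
  have ne: "I - B \<noteq> {}"
  proof
    assume "I - B = {}"
    then have "I \<subseteq> B" by auto
    then have "card I \<le> card B" using card_mono[OF finite_subset[OF B(1) assms(1)]] by blast
    then show False using B Suc.prems by simp
  qed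
  define M where "M = Max ((\<lambda>j. \<bar>f j\<bar>) ` (I - B))"
  have "M \<in> (\<lambda>j. \<bar>f j\<bar>) ` (I - B)" unfolding M_def using fin ne by (intro Max_in) auto
  then obtain j where j1: "j \<in> I - B" "\<bar>f j\<bar> = M" by auto
  have "\<forall>j'\<in>I-B. \<bar>f j'\<bar> \<le> M" unfolding M_def using fin by (intro ballI Max_ge) auto
  with j1 have j: "j \<in> I - B" "\<forall>j'\<in>I-B. \<bar>f j'\<bar> \<le> \<bar>f j\<bar>" by auto
  have "card (insert j B) = Suc b" using B j assms by (simp add: card_insert_disjoint finite_subset)
  moreover have "\<forall>i\<in>insert j B. \<forall>j'\<in>I - insert j B. \<bar>f j'\<bar> \<le> \<bar>f i\<bar>" using B j by auto
  ultimately show ?case using B j by (intro exI[of _ "insert j B"]) auto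
qed

lemma supp_fin_card_restr:
  "card {i. restr v T $ i \<noteq> 0} \<le> card T"
  by (rule card_mono) (auto simp: restr_nth split: if_splits)

lemma l1_bound:
  fixes N :: "real^'n \<Rightarrow> real"
  assumes sub: "\<And>a b. N (a + b) \<le> N a + N b"
    and sp: "\<And>w. card {i. w$i \<noteq> 0} \<le> 1 \<Longrightarrow> N w \<le> U * norm w"
    and U: "U \<ge> 0"
  shows "N r \<le> U * l1norm r"
proof -
  have "N (restr r F) \<le> U * (\<Sum>i\<in>F. \<bar>r$i\<bar>)" for F
  proof (induction F rule: infinite_finite_induct)
    case (infinite A) then show ?case by simp
  next
    case empty
    have "card {i. restr r {} $ i \<noteq> 0} \<le> 1" by (simp add: restr_nth)
    moreover have "restr r {} = 0" by (simp add: vec_eq_iff restr_nth)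
    ultimately have "N 0 \<le> U * norm (0::real^'n)" using sp by metis
    then show ?case using \<open>restr r {} = 0\<close> by simp
  next
    case (insert x F)
    have "restr r (insert x F) = restr r {x} + restr r F"
      using insert restr_add[of "{x}" F r] by simp
    hence "N (restr r (insert x F)) \<le> N (restr r {x}) + N (restr r F)" using sub by simp
    moreover have "N (restr r {x}) \<le> U * norm (restr r {x})"
      using sp supp_fin_card_restr[of r "{x}"] by simp
    moreover have "norm (restr r {x}) = \<bar>r$x\<bar>"
    proof -
      have "(norm (restr r {x}))\<^sup>2 = \<bar>r$x\<bar>\<^sup>2" using norm_restr_sq[of r "{x}"] by simp
      then show ?thesis using power2_eq_iff_nonneg[of "norm (restr r {x})" "\<bar>r$x\<bar>"] by simp
    qed
    moreover have "U * (\<Sum>i\<in>insert x F. \<bar>r$i\<bar>) = U * \<bar>r$x\<bar> + U * (\<Sum>i\<in>F. \<bar>r$i\<bar>)"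
      using insert by (simp add: distrib_left)
    ultimately show ?case using insert.IH by (metis (no_types, lifting) add_mono order_trans)
  qed
  from this[of UNIV] show ?thesis by (simp add: l1norm_def restr_def)
qed

lemma l1_split: "l1norm r = l1norm (restr r B) + l1norm (restr r (-B))"
proof -
  have "l1norm r = (\<Sum>i\<in>UNIV. \<bar>r$i\<bar>)" by (simp add: l1norm_def)
  also have "\<dots> = (\<Sum>i\<in>B. \<bar>r$i\<bar>) + (\<Sum>i\<in>-B. \<bar>r$i\<bar>)"
    using sum.union_disjoint[of B "-B" "\<lambda>i. \<bar>r$i\<bar>"] by (simp add: Un_commute)
  finally show ?thesis by (simp add: l1_restr)
qed

lemma norm_restr_theta:
  assumes "\<forall>i. \<bar>r$i\<bar> \<le> \<theta>"
  shows "norm (restr r T) \<le> sqrt (l1norm (restr r T) * \<theta>)"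
proof -
  have "(\<Sum>i\<in>T. (r$i)\<^sup>2) \<le> (\<Sum>i\<in>T. \<bar>r$i\<bar> * \<theta>)"
  proof (rule sum_mono)
    fix i
    have "(r$i)\<^sup>2 = \<bar>r$i\<bar> * \<bar>r$i\<bar>" by (simp add: power2_eq_square)
    also have "\<dots> \<le> \<bar>r$i\<bar> * \<theta>" using assms by (intro mult_left_mono) auto
    finally show "(r$i)\<^sup>2 \<le> \<bar>r$i\<bar> * \<theta>" .
  qed
  then have "(norm (restr r T))\<^sup>2 \<le> l1norm (restr r T) * \<theta>"
    by (simp add: norm_restr_sq l1_restr sum_distrib_right)
  then show ?thesis by (rule real_le_rsqrt)
qed

lemma tail_bound:
  fixes N :: "real^'n \<Rightarrow> real" and b :: nat
  assumes sub: "\<And>a c. N (a + c) \<le> N a + N c"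
    and sp: "\<And>w. card {i. w$i \<noteq> 0} \<le> b \<Longrightarrow> N w \<le> U * norm w"
    and U: "U \<ge> 0" and b: "b \<ge> 1"
  shows "(\<forall>i. \<bar>r$i\<bar> \<le> \<theta>) \<Longrightarrow> N r \<le> U * (l1norm r / sqrt b + \<theta> * sqrt b / 2)"
proof (induction "card {i. r$i \<noteq> 0}" arbitrary: r \<theta> rule: less_induct)
  case less
  define I where "I = {i. r$i \<noteq> 0}"
  have th: "\<theta> \<ge> 0" using less.prems by (meson abs_ge_zero order_trans)
  have sb: "sqrt (real b) > 0" using b by simp
  have rU: "restr r UNIV = r" by (simp add: vec_eq_iff restr_nth)
  show ?case
  proof (cases "card I \<le> b")
    case True
    have "N r \<le> U * norm r" using sp True I_def by simp
    also have "norm r \<le> sqrt (l1norm r * \<theta>)"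
      using norm_restr_theta[OF less.prems, of UNIV] rU by simp
    also have "\<dots> \<le> l1norm r / (2 * sqrt b) + \<theta> * sqrt b / 2"
      using amgm[of "l1norm r" \<theta> b] l1_nonneg[of r] th b by simp
    also have "\<dots> \<le> l1norm r / sqrt b + \<theta> * sqrt b / 2"
      using sb l1_nonneg[of r] by (simp add: frac_le)
    finally show ?thesis using U by (simp add: mult_left_mono)
  next
    case False
    have finI: "finite I" by simp
    obtain B where B: "B \<subseteq> I" "card B = b" "\<forall>i\<in>B. \<forall>j\<in>I-B. \<bar>r$j\<bar> \<le> \<bar>r$i\<bar>"
      using top_block[OF finI, of b "\<lambda>i. r$i"] False by auto
    define m where "m = l1norm (restr r B)"
    define r' where "r' = restr r (-B)"
    have m_def2: "m = (\<Sum>i\<in>B. \<bar>r$i\<bar>)" by (simp add: m_def l1_restr)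
    have m0: "m \<ge> 0" by (simp add: m_def l1_nonneg)
    have supp': "{i. r'$i \<noteq> 0} = I - B" by (auto simp: r'_def restr_nth I_def)
    have Bne: "B \<noteq> {}" using B b by auto
    have "card (I - B) = card I - b" using B finI by (simp add: card_Diff_subset finite_subset)
    hence "card (I - B) < card I" using False b by simp
    hence lt: "card {i. r'$i \<noteq> 0} < card {i. r$i \<noteq> 0}" using supp' I_def by simp
    have bd: "\<forall>j. \<bar>r'$j\<bar> \<le> m / b"
    proof
      fix j
      show "\<bar>r'$j\<bar> \<le> m / b"
      proof (cases "j \<in> I - B")
        case True
        have "(\<Sum>i\<in>B. \<bar>r$j\<bar>) \<le> (\<Sum>i\<in>B. \<bar>r$i\<bar>)" using B True by (intro sum_mono) auto
        hence "real b * \<bar>r$j\<bar> \<le> m" using B m_def2 by simp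
        hence "\<bar>r$j\<bar> \<le> m / b" using b by (simp add: field_simps)
        then show ?thesis using True by (simp add: r'_def restr_nth)
      next
        case False
        hence "r'$j = 0" by (auto simp: r'_def restr_nth I_def)
        then show ?thesis using m0 by simp
      qed
    qed
    have IH: "N r' \<le> U * (l1norm r' / sqrt b + (m / b) * sqrt b / 2)"
      using less.hyps[OF lt bd] .
    have e1: "(m / b) * sqrt b / 2 = m / (2 * sqrt b)"
    proof -
      have bb: "sqrt (real b) * sqrt (real b) = real b" by simp
      have "(m / b) * sqrt b / 2 = m * sqrt b / (2 * (sqrt b * sqrt b))" by (simp only: bb) simp
      also have "\<dots> = m / (2 * sqrt b)" using sb by (simp add: field_simps)
      finally show ?thesis .
    qed
    have "N (restr r B) \<le> U * norm (restr r B)"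
      using sp supp_fin_card_restr[of r B] B by simp
    also have "\<dots> \<le> U * sqrt (m * \<theta>)"
      using norm_restr_theta[OF less.prems, of B] U m_def by (simp add: mult_left_mono)
    also have "\<dots> \<le> U * (m / (2 * sqrt b) + \<theta> * sqrt b / 2)"
      using amgm[of m \<theta> b] m0 th b U by (simp add: mult_left_mono)
    finally have NB: "N (restr r B) \<le> U * (m / (2 * sqrt b) + \<theta> * sqrt b / 2)" .
    have "N r \<le> N (restr r B) + N r'" using sub[of "restr r B" r'] restr_compl[of r B] r'_def by simp
    also have "\<dots> \<le> U * (m / (2 * sqrt b) + \<theta> * sqrt b / 2) + U * (l1norm r' / sqrt b + m / (2 * sqrt b))"
      using NB IH e1 by simp
    also have "\<dots> = U * ((m + l1norm r') / sqrt b + \<theta> * sqrt b / 2)"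
      by (simp add: algebra_simps add_divide_distrib)
    also have "m + l1norm r' = l1norm r" using l1_split[of r B] m_def r'_def by simp
    finally show ?thesis .
  qed
qed

lemma norm_restr_mono: "S \<subseteq> T \<Longrightarrow> norm (restr v S) \<le> norm (restr v T)"
proof -
  assume "S \<subseteq> T"
  then have "(\<Sum>i\<in>S. (v$i)\<^sup>2) \<le> (\<Sum>i\<in>T. (v$i)\<^sup>2)"
    by (intro sum_mono2) auto
  then have "(norm (restr v S))\<^sup>2 \<le> (norm (restr v T))\<^sup>2" by (simp only: norm_restr_sq)
  then show ?thesis by (simp add: power2_le_iff_abs_le)
qed

lemma key:
  fixes v :: "real^'n" and S :: "'n set" and k t :: nat and \<alpha> \<Delta> :: real
  assumes k1: "k \<ge> 1" and a: "\<alpha> > 0" and D: "\<Delta> \<ge> 0" and cS: "card S = k"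
    and VS: "\<Delta> + l1norm (restr v S) \<ge> l1norm (restr v (- S))"
    and t1: "real t \<le> \<alpha>\<^sup>2 * k" and t2: "\<alpha>\<^sup>2 * k < real t + 1"
  shows "\<exists>T. card T \<le> k + t \<and> (\<forall>N U. (\<forall>a c. N (a + c) \<le> N a + N c) \<and> U \<ge> 0 \<and>
           (\<forall>w. card {i. w$i \<noteq> 0} \<le> k + t \<longrightarrow> N w \<le> U * norm w) \<longrightarrow>
           N (restr v (-T)) \<le> U * (norm (restr v T) / \<alpha> + \<Delta> / (\<alpha> * sqrt k)))"
proof -
  define \<beta> where "\<beta> = \<alpha> * sqrt k"
  have bpos: "\<beta> > 0" using a k1 by (simp add: \<beta>_def)
  have bsq: "\<beta>\<^sup>2 = \<alpha>\<^sup>2 * k" by (simp add: \<beta>_def power_mult_distrib)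
  have l1S: "l1norm (restr v S) \<le> sqrt k * norm (restr v S)"
    using l1_cs[of v S] cS by (simp add: l1_restr)
  have fin: "X \<le> U * (norm (restr v T) / \<alpha> + \<Delta> / (\<alpha> * sqrt k))"
    if "S \<subseteq> T" "0 \<le> c" "c \<le> 1 / \<beta>" "U \<ge> 0" "X \<le> U * ((\<Delta> + l1norm (restr v S)) * c)"
    for T c X U
  proof -
    have "norm (restr v S) \<le> norm (restr v T)" using norm_restr_mono[OF that(1)] .
    hence "l1norm (restr v S) \<le> sqrt k * norm (restr v T)" using l1S
      by (meson mult_left_mono order_trans real_sqrt_ge_zero of_nat_0_le_iff)
    hence "(\<Delta> + l1norm (restr v S)) * c \<le> (\<Delta> + sqrt k * norm (restr v T)) * (1/\<beta>)"
      using that D l1_nonneg[of "restr v S"] by (intro mult_mono) auto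
    also have "\<dots> = norm (restr v T) / \<alpha> + \<Delta> / (\<alpha> * sqrt k)"
      using a k1 by (simp add: \<beta>_def field_simps)
    finally show ?thesis using that(4,5) by (meson mult_left_mono order_trans)
  qed
  show ?thesis
  proof (cases "t = 0")
    case True
    have b1: "\<beta> \<le> 1"
    proof -
      have "\<beta>\<^sup>2 < 1" using bsq t2 True by simp
      then show ?thesis using bpos by (smt (verit) one_le_power)
    qed
    show ?thesis
    proof (intro exI[of _ S] conjI allI impI)
      show "card S \<le> k + t" using cS by simp
      fix N :: "real^'n \<Rightarrow> real" and U :: real
      assume h: "(\<forall>a c. N (a + c) \<le> N a + N c) \<and> U \<ge> 0 \<and>
           (\<forall>w. card {i. w$i \<noteq> 0} \<le> k + t \<longrightarrow> N w \<le> U * norm w)"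
      have "N (restr v (-S)) \<le> U * l1norm (restr v (-S))"
        using h k1 by (intro l1_bound) auto
      also have "\<dots> \<le> U * ((\<Delta> + l1norm (restr v S)) * 1)" using h VS by (simp add: mult_left_mono)
      finally show "N (restr v (-S)) \<le> U * (norm (restr v S) / \<alpha> + \<Delta> / (\<alpha> * sqrt k))"
        using fin[of S 1] h b1 bpos by simp
    qed
  next
    case False
    hence tpos: "t \<ge> 1" by simp
    define b0 where "b0 = min t (card (-S))"
    obtain T1 where T1: "T1 \<subseteq> -S" "card T1 = b0" "\<forall>i\<in>T1. \<forall>j\<in>(-S)-T1. \<bar>v$j\<bar> \<le> \<bar>v$i\<bar>"
      using top_block[of "-S" b0 "\<lambda>i. v$i"] by (auto simp: b0_def)
    define T where "T = S \<union> T1"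
    define m where "m = (\<Sum>i\<in>T1. \<bar>v$i\<bar>)"
    define \<theta> where "\<theta> = m / t"
    have m0: "m \<ge> 0" by (simp add: m_def sum_nonneg)
    have th0: "\<theta> \<ge> 0" using m0 by (simp add: \<theta>_def)
    have cT: "card T \<le> k + t"
      using card_Un_le[of S T1] T1 cS by (simp add: T_def b0_def)
    have bd: "\<forall>j. \<bar>restr v (-T) $ j\<bar> \<le> \<theta>"
    proof
      fix j
      show "\<bar>restr v (-T) $ j\<bar> \<le> \<theta>"
      proof (cases "j \<in> T")
        case True then show ?thesis using th0 by (simp add: restr_nth)
      next
        case False
        hence j: "j \<in> -S - T1" by (auto simp: T_def)
        have "card T1 = t"
        proof (rule ccontr)
          assume "card T1 \<noteq> t"
          hence "card T1 = card (-S)" using T1 by (auto simp: b0_def min_def split: if_splits)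
          hence "T1 = -S" using T1 by (intro card_subset_eq) auto
          then show False using j by auto
        qed
        have "(\<Sum>i\<in>T1. \<bar>v$j\<bar>) \<le> m" unfolding m_def using T1 j by (intro sum_mono) auto
        hence "real t * \<bar>v$j\<bar> \<le> m" using \<open>card T1 = t\<close> by simp
        hence "\<bar>v$j\<bar> \<le> \<theta>" using tpos by (simp add: \<theta>_def field_simps)
        then show ?thesis using False by (simp add: restr_nth)
      qed
    qed
    have split: "l1norm (restr v (-T)) + m = l1norm (restr v (-S))"
    proof -
      have "-S = (-T) \<union> T1" "(-T) \<inter> T1 = {}" using T1 by (auto simp: T_def)
      then show ?thesis unfolding l1_restr m_def by (simp add: sum.union_disjoint)
    qed
    define s where "s = sqrt (real (t + 1))"
    have spos: "s > 0" by (simp add: s_def)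
    have ss: "s * s = real t + 1" by (simp add: s_def)
    have bs: "\<beta> \<le> s"
    proof -
      have "\<beta>\<^sup>2 \<le> s\<^sup>2" using bsq t2 ss by (simp add: power2_eq_square)
      then show ?thesis using bpos spos by (simp add: power2_le_iff_abs_le)
    qed
    have thb: "\<theta> * s / 2 \<le> m / s"
    proof -
      have "\<theta> * s / 2 = m * (s * s) / (2 * t * s)" using tpos spos by (simp add: \<theta>_def field_simps)
      also have "\<dots> \<le> m * (2 * t) / (2 * t * s)"
        using ss tpos m0 spos by (intro divide_right_mono mult_left_mono) auto
      also have "\<dots> = m / s" using tpos spos by (simp add: field_simps)
      finally show ?thesis .
    qed
    show ?thesis
    proof (intro exI[of _ T] conjI allI impI)
      show "card T \<le> k + t" by (rule cT)
      fix N :: "real^'n \<Rightarrow> real" and U :: real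
      assume h: "(\<forall>a c. N (a + c) \<le> N a + N c) \<and> U \<ge> 0 \<and>
           (\<forall>w. card {i. w$i \<noteq> 0} \<le> k + t \<longrightarrow> N w \<le> U * norm w)"
      have "N (restr v (-T)) \<le> U * (l1norm (restr v (-T)) / sqrt (real (t+1)) + \<theta> * sqrt (real (t+1)) / 2)"
        using h k1 by (intro tail_bound[OF _ _ _ _ bd]) auto
      also have "\<dots> \<le> U * (l1norm (restr v (-T)) / s + m / s)"
        using h thb by (intro mult_left_mono) (auto simp: s_def)
      also have "\<dots> = U * (l1norm (restr v (-S)) / s)"
        using split by (simp add: add_divide_distrib[symmetric])
      also have "\<dots> \<le> U * ((\<Delta> + l1norm (restr v S)) * (1 / s))"
        using h VS spos by (intro mult_left_mono) (auto simp: divide_right_mono)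
      finally show "N (restr v (-T)) \<le> U * (norm (restr v T) / \<alpha> + \<Delta> / (\<alpha> * sqrt k))"
        using fin[of T "1/s"] h bs bpos spos by (simp add: T_def frac_le)
    qed
  qed
qed

theorem lemma3p3:
  fixes A :: "real ^ 'n ^ 'm" and k :: nat and \<alpha> \<Delta> L U :: real and S :: "'n set"
    and v :: "real ^ 'n"
  assumes "k \<ge> 1" and "\<alpha> > 0" and "\<Delta> \<ge> 0" and "0 < L" and "L \<le> U"
    and RIP: "\<And>w :: real ^ 'n. sparse ((1 + \<alpha>\<^sup>2) * real k) w \<Longrightarrow>
               L * norm w \<le> l1norm (A *v w) \<and> l1norm (A *v w) \<le> U * norm w"
    and "card S = k"
    and VS: "\<Delta> + l1norm (restr v S) \<ge> l1norm (restr v (- S))"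
  shows "L / (1 + \<alpha>) * (\<alpha> - U / L) * norm v - 2 * U * \<Delta> / (\<alpha> * sqrt (real k))
           \<le> l1norm (A *v v)
       \<and> l1norm (A *v v) \<le> U * (1 + 1 / \<alpha>) * norm v + U * \<Delta> / (\<alpha> * sqrt (real k))"
proof -
  note k1 = assms(1) and a = assms(2) and D = assms(3) and L0 = assms(4) and LU = assms(5)
    and cS = assms(7)
  define t where "t = nat \<lfloor>\<alpha>\<^sup>2 * real k\<rfloor>"
  have x0: "\<alpha>\<^sup>2 * real k \<ge> 0" by simp
  have t1: "real t \<le> \<alpha>\<^sup>2 * real k" using x0 by (simp add: t_def)
  have t2: "\<alpha>\<^sup>2 * real k < real t + 1" using x0 by (simp add: t_def)
  obtain T where cT: "card T \<le> k + t" and KT: "\<forall>N U. (\<forall>a c. N (a + c) \<le> N a + N c) \<and> U \<ge> 0 \<and>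
           (\<forall>w. card {i. w$i \<noteq> 0} \<le> k + t \<longrightarrow> N w \<le> U * norm w) \<longrightarrow>
           N (restr v (-T)) \<le> U * (norm (restr v T) / \<alpha> + \<Delta> / (\<alpha> * sqrt k))"
    using key[OF k1 a D cS VS t1 t2] by blast
  have spk: "sparse ((1 + \<alpha>\<^sup>2) * real k) w" if "card {i. w$i \<noteq> 0} \<le> k + t" for w :: "real^'n"
  proof -
    have "real (card {i. w$i \<noteq> 0}) \<le> real k + real t" using that by linarith
    also have "\<dots> \<le> (1 + \<alpha>\<^sup>2) * real k" using t1 by (simp add: algebra_simps)
    finally show ?thesis by (simp add: sparse_def)
  qed
  define NA where "NA = (\<lambda>w::real^'n. l1norm (A *v w))"
  have U0: "U \<ge> 0" using L0 LU by simp
  define x where "x = restr v T"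
  define r where "r = restr v (-T)"
  have vxr: "v = x + r" using restr_compl[of v T] by (simp add: x_def r_def)
  have NAr: "NA r \<le> U * (norm x / \<alpha> + \<Delta> / (\<alpha> * sqrt k))"
  proof -
    have "(\<forall>a c. NA (a + c) \<le> NA a + NA c)"
      by (simp add: NA_def matrix_vector_right_distrib l1_add)
    moreover have "\<forall>w. card {i. w$i \<noteq> 0} \<le> k + t \<longrightarrow> NA w \<le> U * norm w"
      using RIP spk by (simp add: NA_def)
    ultimately show ?thesis using KT U0 by (simp add: x_def r_def)
  qed
  have nr: "norm r \<le> 1 * (norm x / \<alpha> + \<Delta> / (\<alpha> * sqrt k))"
  proof -
    have "(\<forall>a c. norm (a + c) \<le> norm a + norm (c::real^'n))" by (simp add: norm_triangle_ineq)
    moreover have "\<forall>w::real^'n. card {i. w$i \<noteq> 0} \<le> k + t \<longrightarrow> norm w \<le> 1 * norm w" by simp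
    ultimately show ?thesis using KT[rule_format, of norm 1] by (simp add: x_def r_def)
  qed
  have cx: "card {i. x$i \<noteq> 0} \<le> k + t"
    using supp_fin_card_restr[of v T] cT by (simp add: x_def)
  have NAx: "L * norm x \<le> NA x" "NA x \<le> U * norm x" using RIP[OF spk[OF cx]] by (auto simp: NA_def)
  have NAv1: "NA v \<le> NA x + NA r" unfolding vxr NA_def by (simp add: matrix_vector_right_distrib l1_add)
  have NAv2: "NA x \<le> NA v + NA r"
  proof -
    have "x = v - r" using vxr by simp
    then show ?thesis unfolding NA_def by (simp add: matrix_vector_mult_diff_distrib l1_diff)
  qed
  have nxv: "norm x \<le> norm v" by (simp add: x_def norm_restr_le)
  have nv: "norm v \<le> norm x + norm r" unfolding vxr by (rule norm_triangle_ineq)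
  define E where "E = \<Delta> / (\<alpha> * sqrt k)"
  have E0: "E \<ge> 0" using D a by (simp add: E_def)
  have NA0: "NA v \<ge> 0" by (simp add: NA_def l1_nonneg)
  have upper: "NA v \<le> U * (1 + 1 / \<alpha>) * norm v + U * E"
  proof -
    have "NA v \<le> U * norm x + U * (norm x / \<alpha> + E)" using NAv1 NAx NAr by (simp add: E_def)
    also have "\<dots> = U * (1 + 1/\<alpha>) * norm x + U * E" by (simp add: algebra_simps)
    also have "\<dots> \<le> U * (1 + 1/\<alpha>) * norm v + U * E"
      using U0 a nxv by (intro add_right_mono mult_left_mono) auto
    finally show ?thesis .
  qed
  have lower: "L / (1 + \<alpha>) * (\<alpha> - U / L) * norm v - 2 * U * E \<le> NA v"
  proof -
    define c where "c = (\<alpha> * L - U) / (1 + \<alpha>)"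
    have ceq: "L / (1 + \<alpha>) * (\<alpha> - U / L) = c"
    proof -
      have "L * (\<alpha> - U/L) = \<alpha> * L - U" using L0 by (simp add: right_diff_distrib)
      moreover have "L / (1 + \<alpha>) * (\<alpha> - U / L) = (L * (\<alpha> - U/L)) / (1+\<alpha>)" by simp
      ultimately show ?thesis by (simp add: c_def)
    qed
    show ?thesis
    proof (cases "\<alpha> * L \<ge> U")
      case False
      hence "c \<le> 0" using a by (simp add: c_def divide_nonpos_pos)
      hence "c * norm v \<le> 0" by (simp add: mult_nonpos_nonneg)
      moreover have "0 \<le> 2 * U * E" using U0 E0 by simp
      ultimately show ?thesis unfolding ceq using NA0 by linarith
    next
      case True
      have c0: "c \<ge> 0" using True a by (simp add: c_def)
      have cU: "c \<le> U"
      proof -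
        have "\<alpha> * L \<le> \<alpha> * U" using a LU by simp
        hence "\<alpha> * L - U \<le> U * (1 + \<alpha>)" using U0 by (simp add: algebra_simps)
        then show ?thesis using a unfolding c_def by (simp add: pos_divide_le_eq)
      qed
      have low1: "NA v \<ge> (L - U / \<alpha>) * norm x - U * E"
      proof -
        have "NA v \<ge> L * norm x - U * (norm x / \<alpha> + E)" using NAv2 NAx NAr by (simp add: E_def)
        then show ?thesis by (simp add: algebra_simps)
      qed
      have nvx: "norm v \<le> (1 + 1/\<alpha>) * norm x + E" using nv nr by (simp add: E_def algebra_simps)
      have "(L - U / \<alpha>) * norm x = c * ((1 + 1/\<alpha>) * norm x)"
      proof -
        have h1: "1 + 1/\<alpha> = (1+\<alpha>)/\<alpha>" using a by (simp add: field_simps)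
        have h2: "c * ((1+\<alpha>)/\<alpha>) = (\<alpha>*L - U)/\<alpha>"
          using a unfolding c_def by (metis add_pos_pos less_numeral_extra(1) nonzero_divide_eq_eq times_divide_times_eq mult.commute divide_divide_eq_left order_less_irrefl)
        have h3: "(\<alpha>*L - U)/\<alpha> = L - U/\<alpha>" using a by (simp add: diff_divide_distrib)
        show ?thesis by (metis h1 h2 h3 mult.assoc)
      qed
      also have "\<dots> \<ge> c * (norm v - E)" using nvx c0 by (intro mult_left_mono) auto
      finally have "(L - U / \<alpha>) * norm x \<ge> c * norm v - c * E" by (simp add: algebra_simps)
      moreover have "c * E \<le> U * E" using cU E0 by (simp add: mult_right_mono)
      ultimately show ?thesis unfolding ceq using low1 by linarith
    qed
  qed
  show ?thesis using upper lower by (simp add: NA_def E_def)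
qed

end
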